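(* Let $n\geq 0$ and $\beta\geq 2$ be integers and let $i\in\{1,2\}$. Then for every integer $\alpha\geq 0$, $$\overline{B}_{2^{2\alpha+1},3^\beta}(9n+3i)\equiv 0\pmod 4,$$ and for every integer $\alpha\geq 1$, $$\overline{B}_{2^{2\alpha},3^\beta}(9n+3i)\equiv 0\pmod 8.$$
   Context: An overpartition of a nonnegative integer $n$ is a partition of $n$ (a non-increasing sequence of positive integers summing to $n$) in which the first occurrence of each distinct part may be overlined. For relatively prime integers $\ell_1,\ell_2>1$, an $(\ell_1,\ell_2)$-biregular overpartition of $n$ is an overpartition of $n$ none of whose parts is divisible by $\ell_1$ or by $\ell_2$, and $\overline{B}_{\ell_1,\ell_2}(n)$ denotes the number of such overpartitions ($\overline{B}_{\ell_1,\ell_2}(0)=1$). Equivalently, writing $f_k=(q^k;q^k)_\infty=\prod_{m\ge1}(1-q^{km})$ for $|q|<1$, $$\sum_{n\ge0}\overline{B}_{\ell_1,\ell_2}(n)q^n=\frac{f_2\, f_{\ell_1}^2\, f_{\ell_2}^2\, f_{2\ell_1\ell_2}}{f_1^2\, f_{2\ell_1}\, f_{2\ell_2}\, f_{\ell_1\ell_2}^2}.$$ *)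

theory Defs
  imports Main "HOL-Library.Multiset"
begin

text \<open>An overpartition of n is represented as a pair (M, S): M is the multiset of
parts (positive integers summing to n) and S is the set of distinct parts whose
first occurrence is overlined (S is a subset of the distinct parts of M).\<close>

definition biregular_overpartitions :: "nat \<Rightarrow> nat \<Rightarrow> nat \<Rightarrow> (nat multiset \<times> nat set) set" where
  "biregular_overpartitions l1 l2 n =
     {(M, S). (\<forall>p\<in>#M. 0 < p \<and> \<not> l1 dvd p \<and> \<not> l2 dvd p)
              \<and> sum_mset M = n \<and> S \<subseteq> set_mset M}"

definition Bbar :: "nat \<Rightarrow> nat \<Rightarrow> nat \<Rightarrow> nat" where
  "Bbar l1 l2 n = card (biregular_overpartitions l1 l2 n)"

end

theory Submission
  imports Defs "HOL-Computational_Algebra.Primes"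
begin


definition OP :: "(nat \<Rightarrow> bool) \<Rightarrow> nat \<Rightarrow> (nat multiset \<times> nat set) set" where
  "OP P n = {(M, S). (\<forall>p\<in>#M. 0 < p \<and> P p) \<and> sum_mset M = n \<and> S \<subseteq> set_mset M}"

definition Parts :: "(nat \<Rightarrow> bool) \<Rightarrow> nat \<Rightarrow> nat multiset set" where
  "Parts P n = {M. (\<forall>p\<in>#M. 0 < p \<and> P p) \<and> sum_mset M = n}"

definition opc :: "(nat \<Rightarrow> bool) \<Rightarrow> nat \<Rightarrow> nat" where
  "opc P n = card (OP P n)"

lemma Bbar_opc: "Bbar l1 l2 n = opc (\<lambda>x. \<not> l1 dvd x \<and> \<not> l2 dvd x) n"
  unfolding Bbar_def opc_def OP_def biregular_overpartitions_def by simp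

lemma size_le_sum:
  assumes "\<forall>p\<in>#M. 0 < (p::nat)" shows "size M \<le> sum_mset M"
  using assms
proof (induction M)
  case empty then show ?case by simp
next
  case (add x M) then show ?case by auto
qed

lemma elem_le_sum: "(p::nat) \<in># M \<Longrightarrow> p \<le> sum_mset M"
  by (metis le_add1 multi_member_split sum_mset.add_mset)

lemma finite_Parts: "finite (Parts P n)"
proof -
  have "Parts P n \<subseteq> (\<Union>s\<in>{..n}. multisets_of_size {1..n} s)"
    unfolding Parts_def multisets_of_size_def
    using size_le_sum elem_le_sum by fastforce
  moreover have "finite (\<Union>s\<in>{..n}. multisets_of_size {1..n} s)" by auto
  ultimately show ?thesis by (rule finite_subset)
qed

lemma OP_Sigma: "OP P n = Sigma (Parts P n) (\<lambda>M. Pow (set_mset M))"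
  unfolding OP_def Parts_def by auto

lemma opc_sum: "opc P n = (\<Sum>M\<in>Parts P n. 2 ^ card (set_mset M))"
  unfolding opc_def OP_Sigma
  by (subst card_SigmaI) (auto simp: finite_Parts card_Pow)



definition divs :: "(nat \<Rightarrow> bool) \<Rightarrow> nat \<Rightarrow> nat set" where
  "divs P n = {p. 0 < p \<and> p dvd n \<and> P p}"

definition pairs :: "(nat \<Rightarrow> bool) \<Rightarrow> nat \<Rightarrow> (nat \<times> nat \<times> nat \<times> nat) set" where
  "pairs P n = {(p,j,q,k). 0 < p \<and> p < q \<and> 0 < j \<and> 0 < k \<and> P p \<and> P q \<and> j*p + k*q = n}"

lemma finite_divs: "0 < n \<Longrightarrow> finite (divs P n)"
  unfolding divs_def by (rule finite_subset[of _ "{..n}"]) (auto dest: dvd_imp_le)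

lemma finite_pairs: "finite (pairs P n)"
proof -
  have "pairs P n \<subseteq> {..n} \<times> {..n} \<times> {..n} \<times> {..n}"
    unfolding pairs_def
  proof (clarsimp)
    fix p j q k assume h: "0 < p" "p < q" "0 < j" "0 < k" "n = j * p + k * q"
    have "p \<le> j*p" "j \<le> j*p" "q \<le> k*q" "k \<le> k*q" using h by simp_all
    then show "p \<le> j * p + k * q \<and> j \<le> j * p + k * q \<and> q \<le> j * p + k * q \<and> k \<le> j * p + k * q"
      by linarith
  qed
  then show ?thesis by (rule finite_subset) auto
qed

lemma D1_eq:
  assumes "0 < n"
  shows "{M\<in>Parts P n. card (set_mset M) = 1} = (\<lambda>p. replicate_mset (n div p) p) ` divs P n"
proof (intro equalityI subsetI)
  fix M assume M: "M \<in> {M\<in>Parts P n. card (set_mset M) = 1}"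
  then obtain p where sp: "set_mset M = {p}" by (auto simp: card_1_singleton_iff)
  have Meq: "M = replicate_mset (count M p) p"
    by (rule multiset_eqI) (metis count_eq_zero_iff count_replicate_mset insertCI sp singletonD)
  have "sum_mset M = n" using M by (auto simp: Parts_def)
  moreover have "sum_mset M = count M p * p" by (subst Meq) simp
  ultimately have n: "n = count M p * p" by simp
  have pP: "0 < p \<and> P p" using M sp by (auto simp: Parts_def)
  then have "n div p = count M p" using n by simp
  then show "M \<in> (\<lambda>p. replicate_mset (n div p) p) ` divs P n"
    using Meq pP n by (auto simp: divs_def intro!: image_eqI[of _ _ p])
next
  fix M assume "M \<in> (\<lambda>p. replicate_mset (n div p) p) ` divs P n"
  then obtain p where p: "0 < p" "p dvd n" "P p" and M: "M = replicate_mset (n div p) p"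
    by (auto simp: divs_def)
  have "n div p > 0" using p assms by (metis dvd_div_eq_0_iff gr0I less_numeral_extra(3))
  then show "M \<in> {M\<in>Parts P n. card (set_mset M) = 1}"
    using p M by (auto simp: Parts_def)
qed

lemma D1_card:
  assumes "0 < n"
  shows "card {M\<in>Parts P n. card (set_mset M) = 1} = card (divs P n)"
proof -
  have "inj_on (\<lambda>p. replicate_mset (n div p) p) (divs P n)"
  proof (rule inj_onI)
    fix p q assume p: "p \<in> divs P n" and q: "q \<in> divs P n"
      and eq: "replicate_mset (n div p) p = replicate_mset (n div q) q"
    have "n div p > 0" using p assms unfolding divs_def
      by (metis dvd_div_eq_0_iff gr0I mem_Collect_eq not_less0)
    then have "p \<in># replicate_mset (n div q) q" using eq by (metis in_replicate_mset)
    then show "p = q" by (simp split: if_splits)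
  qed
  then show ?thesis using D1_eq[OF assms] by (simp add: card_image)
qed

definition rr :: "nat \<times> nat \<times> nat \<times> nat \<Rightarrow> nat multiset" where
  "rr x = (case x of (p,j,q,k) \<Rightarrow> replicate_mset j p + replicate_mset k q)"

lemma D2_eq:
  "{M\<in>Parts P n. card (set_mset M) = 2} = rr ` pairs P n"
proof (intro equalityI subsetI)
  fix M assume M: "M \<in> {M\<in>Parts P n. card (set_mset M) = 2}"
  then obtain a b where ab: "set_mset M = {a,b}" "a \<noteq> b" by (auto simp: card_2_iff)
  define p where "p = min a b"
  define q where "q = max a b"
  have sp: "set_mset M = {p,q}" "p < q" using ab unfolding p_def q_def by (auto simp: min_def max_def)
  have Meq: "M = replicate_mset (count M p) p + replicate_mset (count M q) q"
    apply (rule multiset_eqI)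
    using sp by (auto simp: count_eq_zero_iff)
  have "sum_mset M = n" using M by (auto simp: Parts_def)
  moreover have "sum_mset M = count M p * p + count M q * q" by (subst Meq) simp
  ultimately have n: "n = count M p * p + count M q * q" by simp
  have pP: "0 < p \<and> P p" "0 < q \<and> P q" using M sp by (auto simp: Parts_def)
  have c: "0 < count M p" "0 < count M q" using sp by auto
  show "M \<in> rr ` pairs P n"
    using Meq pP n sp c
    by (auto simp: pairs_def rr_def intro!: image_eqI[of _ _ "(p, count M p, q, count M q)"])
next
  fix M assume "M \<in> rr ` pairs P n"
  then obtain p j q k where x: "0 < p" "p < q" "0 < j" "0 < k" "P p" "P q" "j*p+k*q = n"
    and M: "M = replicate_mset j p + replicate_mset k q"
    by (auto simp: pairs_def rr_def)
  have "set_mset M = {p,q}" using M x by auto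
  then show "M \<in> {M\<in>Parts P n. card (set_mset M) = 2}"
    using x M by (auto simp: Parts_def)
qed

lemma D2_card:
  "card {M\<in>Parts P n. card (set_mset M) = 2} = card (pairs P n)"
proof -
  have "inj_on rr (pairs P n)"
  proof (rule inj_onI)
    fix x y assume x: "x \<in> pairs P n" and y: "y \<in> pairs P n" and eq: "rr x = rr y"
    obtain p j q k where xx: "x = (p,j,q,k)" "0 < p" "p < q" "0 < j" "0 < k"
      using x by (auto simp: pairs_def)
    obtain p' j' q' k' where yy: "y = (p',j',q',k')" "0 < p'" "p' < q'" "0 < j'" "0 < k'"
      using y by (auto simp: pairs_def)
    have "set_mset (rr x) = set_mset (rr y)" using eq by simp
    then have s: "{p,q} = {p',q'}"
      using xx yy by (simp add: rr_def) (metis insert_commute)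
    then have pq: "p = p'" "q = q'" using xx yy
      by (metis doubleton_eq_iff not_less_iff_gr_or_eq)+
    have "count (rr x) p = count (rr y) p" "count (rr x) q = count (rr y) q" using eq by auto
    then have "j = j'" "k = k'" using xx yy pq by (auto simp: rr_def)
    then show "x = y" using xx yy pq by simp
  qed
  then show ?thesis using D2_eq by (simp add: card_image)
qed

lemma pow2_mod8: "d \<noteq> 0 \<Longrightarrow> (2::nat) ^ d mod 8 = (if d = 1 then 2 else 0) + (if d = 2 then 4 else 0)"
proof -
  assume "d \<noteq> 0"
  then consider "d = 1" | "d = 2" | "d \<ge> 3" by linarith
  then show ?thesis
  proof cases
    case 3
    then obtain e where "d = e + 3" by (metis le_add_diff_inverse2)
    then show ?thesis by (simp add: power_add)
  qed auto
qed

lemma opc_mod8: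
  assumes "0 < n"
  shows "opc P n mod 8 = (2 * card (divs P n) + 4 * card (pairs P n)) mod 8"
proof -
  have ne: "\<And>M. M \<in> Parts P n \<Longrightarrow> card (set_mset M) \<noteq> 0"
    using assms by (auto simp: Parts_def)
  have "opc P n mod 8 = (\<Sum>M\<in>Parts P n. 2 ^ card (set_mset M) mod 8) mod 8"
    unfolding opc_sum by (simp add: mod_sum_eq)
  also have "(\<Sum>M\<in>Parts P n. (2::nat) ^ card (set_mset M) mod 8) =
     (\<Sum>M\<in>Parts P n. (if card (set_mset M) = 1 then 2 else 0) + (if card (set_mset M) = 2 then 4 else 0))"
    by (rule sum.cong[OF refl]) (simp only: pow2_mod8[OF ne])
  also have "\<dots> = 2 * card {M\<in>Parts P n. card (set_mset M) = 1} + (4::nat) * card {M\<in>Parts P n. card (set_mset M) = 2}"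
    by (simp add: sum.distrib sum.If_cases finite_Parts Int_def conj_commute)
  finally show ?thesis using D1_card[OF assms] D2_card by simp
qed

lemma opc_mod4:
  assumes "0 < n"
  shows "opc P n mod 4 = (2 * card (divs P n)) mod 4"
proof -
  have "opc P n mod 4 = opc P n mod 8 mod 4" by (simp add: mod_mod_cancel)
  also have "\<dots> = (2 * card (divs P n) + 4 * card (pairs P n)) mod 8 mod 4" using opc_mod8[OF assms] by simp
  also have "\<dots> = (2 * card (divs P n)) mod 4" by (simp add: mod_mod_cancel)
  finally show ?thesis .
qed



lemma filt_all: "(\<forall>x\<in>#M. P x) \<Longrightarrow> filter_mset P M = M"
  by (induction M) auto

lemma filt_none: "(\<forall>x\<in>#M. \<not> P x) \<Longrightarrow> filter_mset P M = {#}"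
  by (induction M) auto

lemma img_div_mult: "0 < (c::nat) \<Longrightarrow> image_mset (\<lambda>x. x div c) (image_mset (\<lambda>x. c * x) M) = M"
  by (induction M) auto

lemma img_mult_div: "(\<forall>x\<in>#M. (c::nat) dvd x) \<Longrightarrow> image_mset (\<lambda>x. c * x) (image_mset (\<lambda>x. x div c) M) = M"
  by (induction M) auto

lemma sum_mult: "sum_mset (image_mset (\<lambda>x. (c::nat) * x) M) = c * sum_mset M"
  by (induction M) (auto simp: algebra_simps)

lemma finite_OP: "finite (OP P n)"
  unfolding OP_Sigma by (auto simp: finite_Parts)

lemma opc_split:
  assumes c: "0 < c"
  shows "opc P n = (\<Sum>k\<le>n div c. opc (\<lambda>x. P x \<and> \<not> c dvd x) (n - c*k) * opc (\<lambda>x. P (c*x)) k)"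
proof -
  define P1 where "P1 = (\<lambda>x. P x \<and> \<not> c dvd x)"
  define P2 where "P2 = (\<lambda>x. P (c*x))"
  define A where "A = Sigma {..n div c} (\<lambda>k. OP P1 (n - c*k) \<times> OP P2 k)"
  define f :: "nat \<times> (nat multiset \<times> nat set) \<times> (nat multiset \<times> nat set) \<Rightarrow> nat multiset \<times> nat set"
    where "f = (\<lambda>(k, (M1,S1), (M2,S2)). (M1 + image_mset (\<lambda>x. c*x) M2, S1 \<union> (\<lambda>x. c*x) ` S2))"
  define g :: "nat multiset \<times> nat set \<Rightarrow> nat \<times> (nat multiset \<times> nat set) \<times> (nat multiset \<times> nat set)"
    where "g = (\<lambda>(M,S). (sum_mset (filter_mset (\<lambda>x. c dvd x) M) div c,
       (filter_mset (\<lambda>x. \<not> c dvd x) M, {x\<in>S. \<not> c dvd x}),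
       (image_mset (\<lambda>x. x div c) (filter_mset (\<lambda>x. c dvd x) M), (\<lambda>x. x div c) ` {x\<in>S. c dvd x})))"
  have "bij_betw f A (OP P n)"
  proof (rule bij_betw_byWitness[where f' = g])
    show "\<forall>a\<in>A. g (f a) = a"
    proof
      fix a assume "a \<in> A"
      then obtain k M1 S1 M2 S2 where a: "a = (k, (M1,S1), (M2,S2))" "k \<le> n div c"
        and o1: "(M1,S1) \<in> OP P1 (n - c*k)" and o2: "(M2,S2) \<in> OP P2 k"
        unfolding A_def by auto
      have m1: "\<forall>x\<in>#M1. \<not> c dvd x" "S1 \<subseteq> set_mset M1" using o1 by (auto simp: OP_def P1_def)
      have m2: "sum_mset M2 = k" "S2 \<subseteq> set_mset M2" using o2 by (auto simp: OP_def)
      have e1: "filter_mset ((dvd) c) M1 = {#}" using m1 by (simp add: filt_none)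
      have e2: "filter_mset (\<lambda>x. c dvd x) (image_mset (\<lambda>x. c*x) M2) = image_mset (\<lambda>x. c*x) M2"
        by (rule filt_all) auto
      have e3: "filter_mset (\<lambda>x. \<not> c dvd x) M1 = M1" using m1 by (simp add: filt_all)
      have e4: "filter_mset (\<lambda>x. \<not> c dvd x) (image_mset (\<lambda>x. c*x) M2) = {#}"
        by (rule filt_none) auto
      have e5: "{x \<in> S1 \<union> (\<lambda>x. c*x) ` S2. \<not> c dvd x} = S1" using m1 by auto
      have e6: "{x \<in> S1 \<union> (\<lambda>x. c*x) ` S2. c dvd x} = (\<lambda>x. c*x) ` S2" using m1 by auto
      have e7: "(\<lambda>x. x div c) ` (\<lambda>x. c*x) ` S2 = S2" using c by (simp add: image_image)
      show "g (f a) = a"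
        unfolding a f_def g_def
        using c m2 e5 e6 e7 by (simp add: sum_mult img_div_mult e1 e2 e3 e4)
    qed
    show "\<forall>b\<in>OP P n. f (g b) = b"
    proof
      fix b assume "b \<in> OP P n"
      then obtain M S where b: "b = (M,S)" by (cases b)
      have e1: "image_mset (\<lambda>x. c*x) (image_mset (\<lambda>x. x div c) (filter_mset (\<lambda>x. c dvd x) M))
          = filter_mset (\<lambda>x. c dvd x) M"
        by (rule img_mult_div) auto
      have e2: "{x\<in>S. \<not> c dvd x} \<union> (\<lambda>x. c*x) ` (\<lambda>x. x div c) ` {x\<in>S. c dvd x} = S"
        by (auto simp: image_image)
      show "f (g b) = b"
        unfolding b f_def g_def using e1 e2
        by (simp add: add.commute flip: multiset_partition)
    qed
    show "f ` A \<subseteq> OP P n"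
    proof
      fix b assume "b \<in> f ` A"
      then obtain k M1 S1 M2 S2 where b: "b = f (k, (M1,S1), (M2,S2))" "k \<le> n div c"
        and o1: "(M1,S1) \<in> OP P1 (n - c*k)" and o2: "(M2,S2) \<in> OP P2 k"
        unfolding A_def by auto
      have ck: "c * k \<le> n" using b(2) c
        by (metis div_le_mono div_mult_self1_is_m mult.commute dual_order.trans le_refl
            div_le_dividend dividend_less_div_times less_or_eq_imp_le mult_le_mono2
            div_times_less_eq_dividend)
      have "sum_mset M1 = n - c*k" "sum_mset M2 = k" using o1 o2 by (auto simp: OP_def)
      then have s: "sum_mset M1 + sum_mset (image_mset (\<lambda>x. c*x) M2) = n"
        using ck by (simp add: sum_mult)
      show "b \<in> OP P n"
        using o1 o2 s c unfolding b f_def OP_def P1_def P2_def by auto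
    qed
    show "g ` OP P n \<subseteq> A"
    proof
      fix a assume "a \<in> g ` OP P n"
      then obtain M S where a: "a = g (M,S)" and o: "(M,S) \<in> OP P n" by auto
      define Md where "Md = filter_mset (\<lambda>x. c dvd x) M"
      define Mn where "Mn = filter_mset (\<lambda>x. \<not> c dvd x) M"
      define M2 where "M2 = image_mset (\<lambda>x. x div c) Md"
      have Md2: "Md = image_mset (\<lambda>x. c*x) M2" unfolding M2_def Md_def
        by (rule img_mult_div[symmetric]) auto
      have sM: "sum_mset Mn + sum_mset Md = n" using o unfolding Mn_def Md_def OP_def
        by (auto simp flip: sum_mset.union multiset_partition)
      have sMd: "sum_mset Md = c * sum_mset M2" using Md2 by (simp add: sum_mult)
      have k: "sum_mset Md div c = sum_mset M2" using sMd c by simp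
      have kle: "sum_mset M2 \<le> n div c" using sM sMd c
        by (metis div_le_mono le_add2 nonzero_mult_div_cancel_left not_gr_zero)
      have M2p: "\<forall>x\<in>#M2. 0 < x \<and> P (c*x)"
        using o unfolding M2_def Md_def OP_def
        by (auto elim!: dvdE)
      have Mnp: "\<forall>x\<in>#Mn. 0 < x \<and> P x \<and> \<not> c dvd x" using o unfolding Mn_def OP_def by auto
      have S1: "{x\<in>S. \<not> c dvd x} \<subseteq> set_mset Mn" using o unfolding Mn_def OP_def by auto
      have S2: "(\<lambda>x. x div c) ` {x\<in>S. c dvd x} \<subseteq> set_mset M2" using o unfolding M2_def Md_def OP_def by auto
      have sMn: "sum_mset Mn = n - c * sum_mset M2" using sM sMd by simp
      show "a \<in> A"
        unfolding a A_def g_def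
        using k kle M2p Mnp S1 S2 sMn
        by (simp add: Md_def[symmetric] Mn_def[symmetric] M2_def[symmetric] OP_def P1_def P2_def)
    qed
  qed
  then have "card (OP P n) = card A" by (simp add: bij_betw_same_card)
  also have "card A = (\<Sum>k\<le>n div c. card (OP P1 (n - c*k)) * card (OP P2 k))"
    unfolding A_def by (subst card_SigmaI) (auto simp: finite_OP card_cartesian_product)
  finally show ?thesis unfolding opc_def P1_def P2_def by simp
qed



lemma invol_even:
  assumes "finite X" "\<And>x. x \<in> X \<Longrightarrow> h x \<in> X" "\<And>x. x \<in> X \<Longrightarrow> h (h x) = x"
    "\<And>x. x \<in> X \<Longrightarrow> h x \<noteq> x"
  shows "even (card X)"
  using assms
proof (induction "card X" arbitrary: X rule: less_induct)
  case less
  show ?case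
  proof (cases "X = {}")
    case True then show ?thesis by simp
  next
    case False
    then obtain x where x: "x \<in> X" by auto
    define Y where "Y = X - {x, h x}"
    have hx: "h x \<in> X" "h x \<noteq> x" using less x by auto
    have cY: "card Y = card X - 2" unfolding Y_def using less(2) x hx
      by (subst card_Diff_subset) auto
    have "{x, h x} \<subseteq> X" using x hx by auto
    then have cX: "card X \<ge> 2" using less(2) hx card_mono[of X "{x, h x}"] by auto
    have "even (card Y)"
    proof (rule less(1))
      show "card Y < card X" using cY cX by simp
      show "finite Y" using less(2) by (simp add: Y_def)
      fix y assume y: "y \<in> Y"
      then have y1: "y \<in> X" "y \<noteq> x" "y \<noteq> h x" unfolding Y_def by auto
      have "h y \<noteq> x" using y1 less(4)[of y] less(4)[of x] x by metis
      moreover have "h y \<noteq> h x" using y1 less(4)[of y] less(4)[of x] x by metis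
      ultimately show "h y \<in> Y" using less(3)[OF y1(1)] unfolding Y_def by auto
      show "h (h y) = y" using y less(4) unfolding Y_def by auto
      show "h y \<noteq> y" using y less(5) unfolding Y_def by auto
    qed
    moreover have "card X = card Y + 2" using cY cX by simp
    ultimately show ?thesis by simp
  qed
qed

lemma invol_parity:
  assumes "finite X" "\<And>x. x \<in> X \<Longrightarrow> h x \<in> X" "\<And>x. x \<in> X \<Longrightarrow> h (h x) = x"
  shows "card X mod 2 = card {x\<in>X. h x = x} mod 2"
proof -
  have e: "even (card {x\<in>X. h x \<noteq> x})"
  proof (rule invol_even[where h = h])
    show "finite {x\<in>X. h x \<noteq> x}" using assms by simp
    fix x assume x: "x \<in> {x\<in>X. h x \<noteq> x}"
    then show "h x \<in> {x\<in>X. h x \<noteq> x}" using assms by (metis (mono_tags, lifting) mem_Collect_eq)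
    show "h (h x) = x" using x assms by auto
    show "h x \<noteq> x" using x by auto
  qed
  have "card X = card {x\<in>X. h x = x} + card {x\<in>X. h x \<noteq> x}"
    using assms(1) by (subst card_Un_disjoint[symmetric]) (auto intro: arg_cong[where f = card])
  then show ?thesis using e by presburger
qed

lemma divs_even:
  assumes n: "0 < n" "3 dvd n" "\<not> 9 dvd n"
    and cl: "\<And>d. d dvd n \<Longrightarrow> 3 * d dvd n \<Longrightarrow> P (3 * d) = P d"
  shows "even (card (divs P n))"
proof (rule invol_even[where h = "\<lambda>d. if 3 dvd d then d div 3 else 3 * d"])
  show "finite (divs P n)" using n by (simp add: finite_divs)
  fix d assume d: "d \<in> divs P n"
  then have d0: "0 < d" "d dvd n" "P d" by (auto simp: divs_def)
  show "(if 3 dvd d then d div 3 else 3 * d) \<noteq> d" using d0 by auto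
  show "(if 3 dvd d then d div 3 else 3 * d) \<in> divs P n"
  proof (cases "3 dvd d")
    case True
    then obtain e where e: "d = 3 * e" by auto
    have "e dvd n" "0 < e" using e d0 by auto
    moreover have "P e" using cl[of e] e d0 \<open>e dvd n\<close> by simp
    ultimately show ?thesis using True e by (simp add: divs_def)
  next
    case False
    have "coprime 3 d" using False by (intro prime_imp_coprime) auto
    then have "3 * d dvd n" using n d0 by (simp add: divides_mult)
    then show ?thesis using False d0 cl[of d] by (simp add: divs_def)
  qed
  show "(if 3 dvd (if 3 dvd d then d div 3 else 3 * d) then
          (if 3 dvd d then d div 3 else 3 * d) div 3 else 3 * (if 3 dvd d then d div 3 else 3 * d)) = d"
  proof (cases "3 dvd d")
    case True
    then obtain e where e: "d = 3 * e" by auto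
    have "\<not> 3 dvd e"
    proof
      assume "3 dvd e"
      then obtain f where "e = 3*f" by auto
      then have "d = 9*f" using e by simp
      then have "9 dvd n" using d0 by (metis dvd_trans dvd_triv_left)
      with n show False by simp
    qed
    then show ?thesis using e by simp
  qed simp
qed

lemma tau_even:
  assumes "0 < k" "\<not> (\<exists>a. k = a * a)"
  shows "even (card (divs (\<lambda>_. True) k))"
proof (rule invol_even[where h = "\<lambda>d. k div d"])
  show "finite (divs (\<lambda>_. True) k)" using assms by (simp add: finite_divs)
  fix d assume d: "d \<in> divs (\<lambda>_. True) k"
  then have d0: "0 < d" "d dvd k" by (auto simp: divs_def)
  then obtain m where m: "k = d * m" by auto
  have m0: "0 < m" using m assms by (cases m) auto
  have km: "k div d = m" using m d0 by simp
  show "k div d \<in> divs (\<lambda>_. True) k" using m0 m km by (auto simp: divs_def)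
  show "k div (k div d) = d" using km m m0 by simp
  show "k div d \<noteq> d" using km m assms by auto
qed

lemma sq_mod3: "(x::nat)^2 mod 3 = 0 \<or> x^2 mod 3 = 1"
proof -
  have "x^2 mod 3 = (x mod 3)^2 mod 3" by (simp add: power_mod)
  moreover have "x mod 3 = 0 \<or> x mod 3 = 1 \<or> x mod 3 = 2" by auto
  ultimately show ?thesis by auto
qed

lemma two_sq:
  assumes "3 dvd n" "\<not> 9 dvd (n::nat)"
  shows "n \<noteq> x*x + y*y"
proof
  assume h: "n = x*x + y*y"
  have "x*x mod 3 = 0 \<and> y*y mod 3 = 0"
    using sq_mod3[of x] sq_mod3[of y] assms(1) h unfolding power2_eq_square by presburger
  then have "3 dvd x*x" "3 dvd y*y" by (auto simp: dvd_eq_mod_eq_0)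
  then have "3 dvd x" "3 dvd y" by (auto simp: prime_dvd_mult_iff)
  then have "9 dvd x*x" "9 dvd y*y" by (auto intro: mult_dvd_mono[of 3 _ 3, simplified])
  then have "9 dvd x*x + y*y" by (rule dvd_add)
  then show False using h assms by simp
qed



definition conj4 :: "nat \<times> nat \<times> nat \<times> nat \<Rightarrow> nat \<times> nat \<times> nat \<times> nat" where
  "conj4 x = (case x of (p,j,q,k) \<Rightarrow> (k, q - p, j + k, p))"

definition FF :: "nat \<Rightarrow> (nat \<times> nat) set" where
  "FF n = {(p,j). 0 < p \<and> 0 < j \<and> p * (p + 2*j) = n}"

lemma conj4_in: "x \<in> pairs (\<lambda>_. True) n \<Longrightarrow> conj4 x \<in> pairs (\<lambda>_. True) n"
proof -
  assume "x \<in> pairs (\<lambda>_. True) n"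
  then obtain p j q k where x: "x = (p,j,q,k)" "0 < p" "p < q" "0 < j" "0 < k" "j*p + k*q = n"
    by (auto simp: pairs_def)
  then obtain r where r: "q = p + r" "0 < r" by (metis less_imp_add_positive)
  have "r * k + p * (j + k) = n" using x r by (simp add: algebra_simps)
  then show ?thesis using x r by (simp add: conj4_def pairs_def)
qed

lemma conj4_inv: "x \<in> pairs (\<lambda>_. True) n \<Longrightarrow> conj4 (conj4 x) = x"
  by (auto simp: pairs_def conj4_def)

lemma FF_fin: "0 < n \<Longrightarrow> finite (FF n)"
proof -
  assume n: "0 < n"
  have "FF n \<subseteq> {..n} \<times> {..n}"
  proof
    fix x assume "x \<in> FF n"
    then obtain p j where x: "x = (p,j)" "0 < p" "0 < j" "p * (p + 2*j) = n" by (auto simp: FF_def)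
    have a1: "p * 1 \<le> p * (p+2*j)" using x by (intro mult_le_mono2) simp
    have a2: "1 * (p+2*j) \<le> p * (p + 2*j)" using x by (intro mult_le_mono1) simp
    have "p \<le> n" using a1 x(4) by simp
    have "p + 2*j \<le> n" using a2 x(4) by simp
    then have "j \<le> n" by simp
    note this \<open>p \<le> n\<close>
    then show "x \<in> {..n} \<times> {..n}" using x by auto
  qed
  then show ?thesis by (rule finite_subset) auto
qed

lemma pairs_parity:
  assumes "0 < n"
  shows "card (pairs (\<lambda>_. True) n) mod 2 = card (FF n) mod 2"
proof -
  have "card (pairs (\<lambda>_. True) n) mod 2 = card {x\<in>pairs (\<lambda>_. True) n. conj4 x = x} mod 2"
    by (rule invol_parity) (auto simp: finite_pairs conj4_in conj4_inv)
  also have "{x\<in>pairs (\<lambda>_. True) n. conj4 x = x} = (\<lambda>(p,j). (p,j,p+j,p)) ` FF n"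
  proof (intro equalityI subsetI)
    fix x assume "x \<in> {x\<in>pairs (\<lambda>_. True) n. conj4 x = x}"
    then obtain p j q k where x: "x = (p,j,q,k)" "0 < p" "p < q" "0 < j" "0 < k" "j*p + k*q = n"
      "k = p" "q - p = j" "j + k = q"
      by (auto simp: pairs_def conj4_def)
    have q: "q = p + j" using x by simp
    have "p * (p + 2*j) = n" using x(6,7) unfolding q by (simp add: algebra_simps)
    then show "x \<in> (\<lambda>(p,j). (p,j,p+j,p)) ` FF n"
      using x by (auto simp: FF_def intro!: image_eqI[of _ _ "(p,j)"])
  next
    fix x assume "x \<in> (\<lambda>(p,j). (p,j,p+j,p)) ` FF n"
    then obtain p j where x: "x = (p,j,p+j,p)" "0 < p" "0 < j" "p * (p + 2*j) = n"
      by (auto simp: FF_def)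
    have "j * p + p * (p + j) = n" using x by (simp add: algebra_simps)
    then show "x \<in> {x\<in>pairs (\<lambda>_. True) n. conj4 x = x}"
      using x by (simp add: pairs_def conj4_def)
  qed
  also have "card ((\<lambda>(p,j). (p,j,p+j,p)) ` FF n) = card (FF n)"
    by (rule card_image) (auto simp: inj_on_def)
  finally show ?thesis .
qed


lemma Lo_card:
  assumes "0 < n"
  shows "card {a\<in>divs (\<lambda>_. True) n. a < n div a \<and> even (a + n div a)} = card (FF n)"
proof -
  have "inj_on fst (FF n)"
  proof (rule inj_onI)
    fix x y assume x: "x \<in> FF n" and y: "y \<in> FF n" and e: "fst x = fst y"
    obtain p j where xx: "x = (p,j)" "0 < p" "p * (p + 2*j) = n" using x by (auto simp: FF_def)
    obtain p' j' where yy: "y = (p',j')" "p' * (p' + 2*j') = n" using y by (auto simp: FF_def)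
    have "p = p'" using e xx yy by simp
    then have "p + 2*j = p + 2*j'" using xx yy by (metis mult_left_cancel not_gr0)
    then show "x = y" using xx yy \<open>p = p'\<close> by simp
  qed
  note inj = this
  have im: "fst ` FF n = {a\<in>divs (\<lambda>_. True) n. a < n div a \<and> even (a + n div a)}"
  proof (intro equalityI subsetI)
    fix a assume "a \<in> fst ` FF n"
    then obtain j where j: "0 < a" "0 < j" "a * (a + 2*j) = n" by (auto simp: FF_def)
    then have "n div a = a + 2*j" by auto
    then show "a \<in> {a\<in>divs (\<lambda>_. True) n. a < n div a \<and> even (a + n div a)}"
      using j by (auto simp: divs_def)
  next
    fix a assume a: "a \<in> {a\<in>divs (\<lambda>_. True) n. a < n div a \<and> even (a + n div a)}"
    then have a0: "0 < a" "a dvd n" "a < n div a" "even (a + n div a)" by (auto simp: divs_def)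
    define j where "j = (n div a - a) div 2"
    have "n div a = a + 2 * j"
    proof -
      obtain m where m: "m = n div a" by simp
      show ?thesis using a0(3,4) unfolding j_def m[symmetric] by presburger
    qed
    moreover have "a * (n div a) = n" using a0 by simp
    ultimately have "a * (a + 2*j) = n" by simp
    moreover have "0 < j"
    proof -
      obtain m where m: "m = n div a" by simp
      show ?thesis using a0(3,4) unfolding j_def m[symmetric] by presburger
    qed
    ultimately show "a \<in> fst ` FF n" using a0 by (force simp: FF_def)
  qed
  show ?thesis using card_image[OF inj] unfolding im by simp
qed


lemma Hi_card:
  assumes "0 < n"
  shows "card {a\<in>divs (\<lambda>_. True) n. n div a < a \<and> even (a + n div a)} =
         card {a\<in>divs (\<lambda>_. True) n. a < n div a \<and> even (a + n div a)}"
proof -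
  let ?Lo = "{a\<in>divs (\<lambda>_. True) n. a < n div a \<and> even (a + n div a)}"
  let ?Hi = "{a\<in>divs (\<lambda>_. True) n. n div a < a \<and> even (a + n div a)}"
  have key: "n div a \<in> divs (\<lambda>_. True) n \<and> n div (n div a) = a" if "a \<in> divs (\<lambda>_. True) n" for a
  proof -
    have a: "0 < a" "a dvd n" using that by (auto simp: divs_def)
    then obtain m where m: "n = a * m" by auto
    then have "0 < m" using assms by (cases m) auto
    have "n div a = m" using m a by simp
    moreover have "n div m = a" using m \<open>0 < m\<close> by simp
    ultimately show ?thesis using m a \<open>0 < m\<close> unfolding divs_def by simp
  qed
  have inj: "inj_on (\<lambda>a. n div a) ?Lo"
  proof (rule inj_onI)
    fix a b assume ab: "a \<in> ?Lo" "b \<in> ?Lo" "n div a = n div b"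
    have "a = n div (n div a)" using key[of a] ab(1) by simp
    also have "\<dots> = n div (n div b)" using ab(3) by simp
    also have "\<dots> = b" using key[of b] ab(2) by simp
    finally show "a = b" .
  qed
  have im: "(\<lambda>a. n div a) ` ?Lo = ?Hi"
  proof (intro equalityI subsetI)
    fix b assume "b \<in> (\<lambda>a. n div a) ` ?Lo"
    then obtain a where a: "a \<in> ?Lo" "b = n div a" by auto
    have "b \<in> divs (\<lambda>_. True) n" "n div b = a" using key[of a] a by auto
    moreover have "even (b + n div b)" using a \<open>n div b = a\<close> by (simp add: add.commute)
    ultimately show "b \<in> ?Hi" using a by simp
  next
    fix b assume b: "b \<in> ?Hi"
    have kb: "n div b \<in> divs (\<lambda>_. True) n" "n div (n div b) = b" using key[of b] b by auto
    have "n div b \<in> ?Lo" using kb b by (simp add: add.commute)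
    then show "b \<in> (\<lambda>a. n div a) ` ?Lo" by (rule image_eqI[rotated]) (use kb(2) in simp)
  qed
  show ?thesis using card_image[OF inj] unfolding im by simp
qed


lemma Opp_card:
  assumes n: "0 < n" "3 dvd n" "\<not> 9 dvd n"
  shows "card {a\<in>divs (\<lambda>_. True) n. odd (a + n div a)} mod 4 = 0"
proof (cases "even n")
  case False
  have e: "{a\<in>divs (\<lambda>_. True) n. odd (a + n div a)} = {}"
  proof (rule ccontr)
    assume "{a\<in>divs (\<lambda>_. True) n. odd (a + n div a)} \<noteq> {}"
    then obtain a where a: "a dvd n" "odd (a + n div a)" by (auto simp: divs_def)
    have "n = a * (n div a)" using a by simp
    then have "odd a" "odd (n div a)" using False by (metis even_mult_iff)+
    then show False using a by simp
  qed
  show ?thesis unfolding e by simp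
next
  case True
  define Oo where "Oo = divs odd n"
  define Oe where "Oe = (\<lambda>a. n div a) ` Oo"
  have key: "n div a \<in> divs (\<lambda>_. True) n \<and> n div (n div a) = a \<and> n = a * (n div a)"
    if "a \<in> divs P n" for a P
  proof -
    have a: "0 < a" "a dvd n" using that by (auto simp: divs_def)
    then obtain m where m: "n = a * m" by auto
    then have "0 < m" using n by (cases m) auto
    have "n div a = m" using m a by simp
    moreover have "n div m = a" using m \<open>0 < m\<close> by simp
    ultimately show ?thesis using m a \<open>0 < m\<close> unfolding divs_def by simp
  qed
  have fin: "finite Oo" unfolding Oo_def using n by (simp add: finite_divs)
  have eq: "{a\<in>divs (\<lambda>_. True) n. odd (a + n div a)} = Oo \<union> Oe"
  proof (intro equalityI subsetI)
    fix a assume a: "a \<in> {a\<in>divs (\<lambda>_. True) n. odd (a + n div a)}"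
    then have a1: "a \<in> divs (\<lambda>_. True) n" "odd (a + n div a)" by auto
    have k: "n div a \<in> divs (\<lambda>_. True) n" "n div (n div a) = a" using key[OF a1(1)] by auto
    show "a \<in> Oo \<union> Oe"
    proof (cases "odd a")
      case True then show ?thesis using a1 by (auto simp: Oo_def divs_def)
    next
      case False
      then have "odd (n div a)" using a1 by simp
      then have "n div a \<in> Oo" using k by (auto simp: Oo_def divs_def)
      then have "n div (n div a) \<in> Oe" unfolding Oe_def by (rule imageI)
      then show ?thesis using k by simp
    qed
  next
    fix a assume "a \<in> Oo \<union> Oe"
    then show "a \<in> {a\<in>divs (\<lambda>_. True) n. odd (a + n div a)}"
    proof
      assume a: "a \<in> Oo"
      then have "odd a" "a \<in> divs (\<lambda>_. True) n" by (auto simp: Oo_def divs_def)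
      moreover have "n = a * (n div a)" using key[OF a[unfolded Oo_def]] by simp
      ultimately have "even (n div a)" using True by (metis even_mult_iff)
      then show ?thesis using \<open>odd a\<close> \<open>a \<in> divs (\<lambda>_. True) n\<close> by simp
    next
      assume "a \<in> Oe"
      then obtain c where c: "c \<in> Oo" "a = n div c" unfolding Oe_def by auto
      have kc: "n div c \<in> divs (\<lambda>_. True) n" "n div (n div c) = c" "n = c * (n div c)" using key[OF c(1)[unfolded Oo_def]] by auto
      have "odd c" using c by (auto simp: Oo_def divs_def)
      then have "even (n div c)" using kc(3) True by (metis even_mult_iff)
      then show ?thesis using kc c \<open>odd c\<close> by simp
    qed
  qed
  have disj: "Oo \<inter> Oe = {}"
  proof (rule ccontr)
    assume "Oo \<inter> Oe \<noteq> {}"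
    then obtain a c where a: "a \<in> Oo" "c \<in> Oo" "a = n div c" unfolding Oe_def by auto
    have kc: "n = c * (n div c)" using key[OF a(2)[unfolded Oo_def]] by simp
    have "odd a" "odd c" using a by (auto simp: Oo_def divs_def)
    then have "odd n" using kc a(3) by (metis even_mult_iff)
    then show False using True by simp
  qed
  have inj: "inj_on (\<lambda>a. n div a) Oo"
  proof (rule inj_onI)
    fix a b assume ab: "a \<in> Oo" "b \<in> Oo" "n div a = n div b"
    have "a = n div (n div a)" using key[OF ab(1)[unfolded Oo_def]] by simp
    also have "\<dots> = n div (n div b)" using ab(3) by simp
    also have "\<dots> = b" using key[OF ab(2)[unfolded Oo_def]] by simp
    finally show "a = b" .
  qed
  have cOe: "card Oe = card Oo" unfolding Oe_def by (rule card_image[OF inj])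
  have ev: "even (card Oo)" unfolding Oo_def by (rule divs_even) (use n in auto)
  have cU: "card (Oo \<union> Oe) = card Oo + card Oe"
    using fin disj by (simp add: card_Un_disjoint Oe_def)
  have c2: "card {a\<in>divs (\<lambda>_. True) n. odd (a + n div a)} = 2 * card Oo"
    unfolding eq using cU cOe by simp
  obtain k where "card Oo = 2 * k" using ev by auto
  then show ?thesis unfolding c2 by simp
qed

lemma pbar_mod8:
  assumes n: "0 < n" "3 dvd n" "\<not> 9 dvd n"
  shows "opc (\<lambda>_. True) n mod 8 = 0"
proof -
  let ?D = "divs (\<lambda>_. True) n"
  let ?Lo = "{a\<in>?D. a < n div a \<and> even (a + n div a)}"
  let ?Hi = "{a\<in>?D. n div a < a \<and> even (a + n div a)}"
  let ?Op = "{a\<in>?D. odd (a + n div a)}"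
  have fin: "finite ?D" using n by (simp add: finite_divs)
  have nsq: "a \<noteq> n div a" if "a \<in> ?D" for a
  proof
    assume "a = n div a"
    moreover have "n = a * (n div a)" using that by (simp add: divs_def)
    ultimately have "n = a * a + 0 * 0" by simp
    then show False using two_sq[OF n(2,3)] by blast
  qed
  have part: "?D = ?Lo \<union> ?Hi \<union> ?Op"
    using nsq by (auto simp: linorder_neq_iff)
  have cD: "card ?D = card ?Lo + card ?Hi + card ?Op"
  proof -
    have "card ?D = card (?Lo \<union> ?Hi \<union> ?Op)" using part by (rule arg_cong)
    also have "\<dots> = card (?Lo \<union> ?Hi) + card ?Op"
      using fin by (intro card_Un_disjoint) auto
    also have "card (?Lo \<union> ?Hi) = card ?Lo + card ?Hi"
      using fin by (intro card_Un_disjoint) auto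
    finally show ?thesis by simp
  qed
  have L: "card ?Lo = card (FF n)" by (rule Lo_card[OF n(1)])
  have H: "card ?Hi = card ?Lo" by (rule Hi_card[OF n(1)])
  have O: "card ?Op mod 4 = 0" by (rule Opp_card[OF n])
  have P: "card (pairs (\<lambda>_. True) n) mod 2 = card (FF n) mod 2" by (rule pairs_parity[OF n(1)])
  have "opc (\<lambda>_. True) n mod 8 = (2 * card ?D + 4 * card (pairs (\<lambda>_. True) n)) mod 8"
    by (rule opc_mod8[OF n(1)])
  also have "\<dots> = 0" using cD L H O P by presburger
  finally show ?thesis .
qed



lemma opc_zero: "opc P 0 = 1"
proof -
  have "Parts P 0 = {{#}}"
  proof (intro equalityI subsetI)
    fix M assume "M \<in> Parts P 0"
    then have "\<forall>p\<in>#M. 0 < p" "sum_mset M = 0" by (auto simp: Parts_def)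
    then show "M \<in> {{#}}" by (metis elem_le_sum le_zero_eq less_irrefl multiset_nonemptyE singletonI)
  qed (auto simp: Parts_def)
  then show ?thesis by (simp add: opc_sum)
qed

lemma sum_split0: "(\<Sum>k\<le>(m::nat). f k) = f 0 + (\<Sum>k\<in>{1..m}. (f k :: nat))"
proof -
  have "{..m} = insert 0 {1..m}" by auto
  then show ?thesis by simp
qed

lemma mod8_prod:
  assumes "x mod 4 = (2*a) mod 4" "y mod 4 = (2*b) mod 4" "even (a*b)"
  shows "(x*y) mod 8 = (0::nat)"
proof -
  obtain x' where x: "x = 2*x'" using assms(1) by (metis dvd_def even_mod_4_div_2 mod_mult_mult1 mult_2 mult_numeral_1_right numeral_Bit0 odd_iff_mod_2_eq_one mod_mod_cancel) 
  obtain y' where y: "y = 2*y'" using assms(2) by (metis dvd_def even_mod_4_div_2 mod_mult_mult1 mult_2 mult_numeral_1_right numeral_Bit0 odd_iff_mod_2_eq_one mod_mod_cancel)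
  have "x' mod 2 = a mod 2" using assms(1) x by (simp add: mod_mult_mult1[of 2 _ 2, simplified])
  moreover have "y' mod 2 = b mod 2" using assms(2) y by (simp add: mod_mult_mult1[of 2 _ 2, simplified])
  ultimately have "even (x'*y')" using assms(3) by (simp add: even_iff_mod_2_eq_zero mod_mult_eq[symmetric, of x'] mod_mult_eq[symmetric, of a])
  then show ?thesis using x y by (auto elim!: evenE)
qed



lemma cd_even:
  assumes M: "0 < M" "\<not> (\<exists>t. M = t*t)" and l: "0 < l"
    and Ml: "l dvd M \<Longrightarrow> \<not> (\<exists>t. M div l = t*t)"
  shows "even (card (divs (\<lambda>x. \<not> l dvd x) M))"
proof -
  let ?D = "divs (\<lambda>_. True) M"
  let ?A = "divs (\<lambda>x. \<not> l dvd x) M"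
  let ?B = "{d\<in>?D. l dvd d}"
  have fin: "finite ?D" using M by (simp add: finite_divs)
  have part: "?D = ?A \<union> ?B" by (auto simp: divs_def)
  have cD: "card ?D = card ?A + card ?B"
  proof -
    have "card ?D = card (?A \<union> ?B)" using part by (rule arg_cong)
    also have "\<dots> = card ?A + card ?B"
      by (rule card_Un_disjoint) (use M fin in \<open>auto simp: divs_def finite_divs\<close>)
    finally show ?thesis .
  qed
  have eD: "even (card ?D)" by (rule tau_even[OF M])
  have eB: "even (card ?B)"
  proof (cases "l dvd M")
    case False
    then have e: "?B = {}" by (auto simp: divs_def dest: dvd_trans)
    show ?thesis unfolding e by simp
  next
    case True
    then obtain m where m: "M = l * m" by auto
    have m0: "0 < m" using M m by (cases m) auto
    have "?B = (\<lambda>e. l * e) ` divs (\<lambda>_. True) m"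
    proof (intro equalityI subsetI)
      fix d assume "d \<in> ?B"
      then obtain e where e: "d = l * e" "0 < d" "d dvd M" by (auto simp: divs_def)
      then have "e dvd m" "0 < e" using m l by auto
      then show "d \<in> (\<lambda>e. l * e) ` divs (\<lambda>_. True) m" using e by (auto simp: divs_def)
    next
      fix d assume "d \<in> (\<lambda>e. l * e) ` divs (\<lambda>_. True) m"
      then obtain e where e: "d = l * e" "0 < e" "e dvd m" by (auto simp: divs_def)
      then show "d \<in> ?B" using m l by (auto simp: divs_def)
    qed
    moreover have "inj_on (\<lambda>e. l * e) (divs (\<lambda>_. True) m)" using l by (auto simp: inj_on_def)
    ultimately have "card ?B = card (divs (\<lambda>_. True) m)" by (simp add: card_image)
    moreover have "even (card (divs (\<lambda>_. True) m))"
      by (rule tau_even[OF m0]) (use Ml True m l in auto)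
    ultimately show ?thesis by simp
  qed
  show ?thesis using cD eD eB by simp
qed

lemma three_not_dvd_pow2: "\<not> (3::nat) dvd 2 ^ e"
proof
  assume "(3::nat) dvd 2 ^ e"
  then have "(3::nat) dvd 2" using prime_dvd_power[of "3::nat" 2 e] by auto
  then show False by simp
qed

lemma b_mod8:
  assumes a: "0 < \<alpha>" and N: "0 < N" "3 dvd N" "\<not> 9 dvd N"
  shows "opc (\<lambda>x. \<not> 2 ^ (2*\<alpha>) dvd x) N mod 8 = 0"
proof -
  define l :: nat where "l = 2 ^ (2*\<alpha>)"
  define r :: nat where "r = 2 ^ \<alpha>"
  have lr: "l = r * r" unfolding l_def r_def by (simp add: power_add[symmetric] mult_2)
  have l0: "0 < l" unfolding l_def by simp
  define b where "b = opc (\<lambda>x. \<not> l dvd x)"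
  define pb where "pb = opc (\<lambda>_. True)"
  have eqP: "(\<lambda>x. True \<and> \<not> l dvd x) = (\<lambda>x. \<not> l dvd x)" by simp
  have spl: "pb N = (\<Sum>k\<le>N div l. b (N - l*k) * pb k)"
    unfolding pb_def b_def using opc_split[OF l0, of "\<lambda>_. True" N] by (simp add: eqP)
  have terms: "8 dvd b (N - l*k) * pb k" if k: "k \<in> {1..N div l}" for k
  proof -
    have k0: "0 < k" using k by simp
    have lk: "l * k \<le> N" using k by (metis atLeastAtMost_iff div_le_mono div_mult_self1_is_m l0 mult.commute
        le_div_geq not_le div_less_iff_less_mult)
    show ?thesis
    proof (cases "N - l*k = 0")
      case True
      then have Nk: "N = l * k" using lk by simp
      have "3 dvd k"
      proof -
        have "3 dvd l * k" using Nk N by simp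
        then have "3 dvd l \<or> 3 dvd k" by (simp add: prime_dvd_mult_iff)
        then show ?thesis using three_not_dvd_pow2 unfolding l_def by blast
      qed
      moreover have "\<not> 9 dvd k" using Nk N by (metis dvd_mult)
      ultimately have "pb k mod 8 = 0" unfolding pb_def by (intro pbar_mod8 k0)
      then show ?thesis by (simp add: dvd_mult mod_eq_0_iff_dvd)
    next
      case False
      define M where "M = N - l*k"
      have M0: "0 < M" using False M_def by simp
      have NM: "N = M + l*k" using lk M_def by simp
      have m1: "b M mod 4 = 2 * card (divs (\<lambda>x. \<not> l dvd x) M) mod 4"
        unfolding b_def by (rule opc_mod4[OF M0])
      have m2: "pb k mod 4 = 2 * card (divs (\<lambda>_. True) k) mod 4"
        unfolding pb_def by (rule opc_mod4[OF k0])
      have ev: "even (card (divs (\<lambda>x. \<not> l dvd x) M) * card (divs (\<lambda>_. True) k))"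
      proof (cases "\<exists>s. k = s*s")
        case False
        then show ?thesis using tau_even[OF k0] by simp
      next
        case True
        then obtain s where s: "k = s*s" by auto
        have lk2: "l * k = (r*s)*(r*s)" using lr s by (simp add: algebra_simps)
        have "even (card (divs (\<lambda>x. \<not> l dvd x) M))"
        proof (rule cd_even[OF M0 _ l0])
          show "\<not> (\<exists>t. M = t*t)"
          proof
            assume "\<exists>t. M = t*t"
            then obtain t where "M = t*t" by auto
            then have "N = t*t + (r*s)*(r*s)" using NM lk2 by simp
            then show False using two_sq[OF N(2,3)] by blast
          qed
          assume "l dvd M"
          then obtain u where u: "M = l*u" by auto
          show "\<not> (\<exists>t. M div l = t*t)"
          proof
            assume "\<exists>t. M div l = t*t"
            then obtain t where "M div l = t*t" by auto
            then have "u = t*t" using u l0 by simp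
            then have "M = (r*t)*(r*t)" using u lr by (simp add: algebra_simps)
            then have "N = (r*t)*(r*t) + (r*s)*(r*s)" using NM lk2 by simp
            then show False using two_sq[OF N(2,3)] by blast
          qed
        qed
        then show ?thesis by simp
      qed
      have "(b M * pb k) mod 8 = 0" by (rule mod8_prod[OF m1 m2 ev])
      then show ?thesis unfolding M_def by (simp add: mod_eq_0_iff_dvd)
    qed
  qed
  have "8 dvd (\<Sum>k\<in>{1..N div l}. b (N - l*k) * pb k)" using terms by (rule dvd_sum)
  moreover have "pb N = b N + (\<Sum>k\<in>{1..N div l}. b (N - l*k) * pb k)"
    using spl by (simp add: sum_split0 pb_def opc_zero)
  moreover have "8 dvd pb N" unfolding pb_def using pbar_mod8[OF N] by (simp add: mod_eq_0_iff_dvd)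
  ultimately have "8 dvd b N" by (metis dvd_add_left_iff)
  then show ?thesis unfolding b_def l_def by (simp add: mod_eq_0_iff_dvd)
qed



lemma mod9_facts:
  assumes "N mod 9 = 3 \<or> N mod 9 = (6::nat)"
  shows "0 < N" "3 dvd N" "\<not> 9 dvd N"
  using assms by presburger+

lemma B_mod8:
  assumes a: "0 < \<alpha>" and bt: "2 \<le> \<beta>"
  shows "N mod 9 = 3 \<or> N mod 9 = 6 \<Longrightarrow>
     opc (\<lambda>x. \<not> 2 ^ (2*\<alpha>) dvd x \<and> \<not> 3 ^ \<beta> dvd x) N mod 8 = 0"
proof (induction N rule: less_induct)
  case (less N)
  note Nf = mod9_facts[OF less.prems]
  define c :: nat where "c = 3 ^ \<beta>"
  have c0: "0 < c" unfolding c_def by simp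
  have c9: "9 dvd c"
  proof -
    obtain d where d: "\<beta> = d + 2" using bt by (metis add.commute le_Suc_ex)
    have "c = 3^d * 3^2" unfolding c_def d by (rule power_add)
    then show ?thesis by simp
  qed
  define B where "B = opc (\<lambda>x. \<not> 2 ^ (2*\<alpha>) dvd x \<and> \<not> c dvd x)"
  define Q where "Q = opc (\<lambda>x. \<not> 2 ^ (2*\<alpha>) dvd (c*x))"
  have spl: "opc (\<lambda>x. \<not> 2 ^ (2*\<alpha>) dvd x) N = (\<Sum>k\<le>N div c. B (N - c*k) * Q k)"
    unfolding B_def Q_def by (rule opc_split[OF c0])
  have terms: "8 dvd B (N - c*k) * Q k" if k: "k \<in> {1..N div c}" for k
  proof -
    have "c * k \<le> c * (N div c)" using k by simp
    also have "\<dots> \<le> N" by (rule times_div_less_eq_dividend)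
    finally have ck: "c * k \<le> N" .
    have "9 dvd c * k" using c9 by simp
    then obtain t where t: "c * k = 9 * t" by auto
    have "N = (N - c*k) + 9 * t" using ck t by simp
    then have m: "(N - c*k) mod 9 = N mod 9" by (metis mod_mult_self2)
    have lt: "N - c*k < N" using k c0 Nf by simp
    have "B (N - c*k) mod 8 = 0"
      using less.IH[OF lt] less.prems m unfolding B_def c_def by simp
    then show ?thesis by (simp add: mod_eq_0_iff_dvd)
  qed
  have "8 dvd (\<Sum>k\<in>{1..N div c}. B (N - c*k) * Q k)" using terms by (rule dvd_sum)
  moreover have "opc (\<lambda>x. \<not> 2 ^ (2*\<alpha>) dvd x) N = B N + (\<Sum>k\<in>{1..N div c}. B (N - c*k) * Q k)"
    using spl by (simp add: sum_split0 Q_def opc_zero)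
  moreover have "8 dvd opc (\<lambda>x. \<not> 2 ^ (2*\<alpha>) dvd x) N"
    using b_mod8[OF a Nf] by (simp add: mod_eq_0_iff_dvd)
  ultimately have "8 dvd B N" by (metis dvd_add_left_iff)
  then show ?case unfolding B_def c_def by (simp add: mod_eq_0_iff_dvd)
qed

lemma B_mod4:
  assumes bt: "2 \<le> \<beta>" and N: "0 < N" "3 dvd N" "\<not> 9 dvd N"
  shows "opc (\<lambda>x. \<not> 2 ^ e dvd x \<and> \<not> 3 ^ \<beta> dvd x) N mod 4 = 0"
proof -
  have c9: "9 dvd (3::nat) ^ \<beta>"
  proof -
    obtain d where d: "\<beta> = d + 2" using bt by (metis add.commute le_Suc_ex)
    have "(3::nat)^\<beta> = 3^d * 3^2" unfolding d by (rule power_add)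
    then show ?thesis by simp
  qed
  have cop: "coprime ((2::nat) ^ e) 3" by simp
  have "even (card (divs (\<lambda>x. \<not> 2 ^ e dvd x \<and> \<not> 3 ^ \<beta> dvd x) N))"
  proof (rule divs_even[OF N])
    fix d assume d: "d dvd N" "3 * d dvd N"
    have "\<not> 3 ^ \<beta> dvd 3 * d"
    proof
      assume "3 ^ \<beta> dvd 3 * d"
      then have "9 dvd N" using c9 d(2) by (metis dvd_trans)
      then show False using N by simp
    qed
    moreover have "\<not> 3 ^ \<beta> dvd d" using calculation by (metis dvd_mult2 mult.commute)
    moreover have "2 ^ e dvd 3 * d \<longleftrightarrow> 2 ^ e dvd d" using cop by (rule coprime_dvd_mult_right_iff)
    ultimately show "(\<not> 2 ^ e dvd 3 * d \<and> \<not> 3 ^ \<beta> dvd 3 * d) = (\<not> 2 ^ e dvd d \<and> \<not> 3 ^ \<beta> dvd d)"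
      by simp
  qed
  then obtain k where "card (divs (\<lambda>x. \<not> 2 ^ e dvd x \<and> \<not> 3 ^ \<beta> dvd x) N) = 2 * k" by auto
  then show ?thesis using opc_mod4[OF N(1)] by simp
qed

theorem theorem3:
  fixes n \<beta> :: nat and i :: nat
  assumes "\<beta> \<ge> 2" and "i \<in> {1, 2}"
  shows "(\<forall>\<alpha>::nat. Bbar (2 ^ (2 * \<alpha> + 1)) (3 ^ \<beta>) (9 * n + 3 * i) mod 4 = 0)
       \<and> (\<forall>\<alpha>::nat. \<alpha> \<ge> 1 \<longrightarrow> Bbar (2 ^ (2 * \<alpha>)) (3 ^ \<beta>) (9 * n + 3 * i) mod 8 = 0)"
proof -
  have m: "(9 * n + 3 * i) mod 9 = 3 \<or> (9 * n + 3 * i) mod 9 = 6" using assms(2) by auto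
  note Nf = mod9_facts[OF m]
  show ?thesis
  proof (intro conjI allI impI)
    fix \<alpha> :: nat
    show "Bbar (2 ^ (2 * \<alpha> + 1)) (3 ^ \<beta>) (9 * n + 3 * i) mod 4 = 0"
      unfolding Bbar_opc by (rule B_mod4[OF assms(1) Nf])
  next
    fix \<alpha> :: nat assume "\<alpha> \<ge> 1"
    then have "0 < \<alpha>" by simp
    show "Bbar (2 ^ (2 * \<alpha>)) (3 ^ \<beta>) (9 * n + 3 * i) mod 8 = 0"
      unfolding Bbar_opc by (rule B_mod8[OF \<open>0 < \<alpha>\<close> assms(1) m])
  qed
qed

end
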